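(* Let $w_1,w_2,w_3\in(-\infty,1)\setminus\{0\}$, $n_j=\tfrac12(1-\sqrt{1-w_j})$, and for $\lambda\in\mathbb{S}^1$ let $\nu(\lambda)=(\nu_{w_1}(\lambda),\nu_{w_2}(\lambda),\nu_{w_3}(\lambda))$ with $\nu_w(\lambda)=\frac12-\frac12\sqrt{1+\frac{w(\lambda-1)^2}{4\lambda}}$ (nonnegative square root). Then $\nu(\lambda)\in T$ for all $\lambda\in\mathbb{S}^1$ if and only if \[ |n_1|+|n_2|+|n_3|\le 1,\quad |n_i|\le|n_j|+|n_k|,\quad |w_i|\le|w_j|+|w_k|\quad\text{for all }\{i,j,k\}=\{1,2,3\}. \]
   Context: $T_0\subset\mathbb{R}^3$ is the closed tetrahedron $\{(\nu_1,\nu_2,\nu_3):\nu_1+\nu_2+\nu_3\le1,\ \nu_i\le\nu_j+\nu_k\ \forall\{i,j,k\}=\{1,2,3\}\}$, and $T$ is the orbit of $T_0$ under the group of transformations of $\mathbb{R}^3$ generated by the maps $\nu_k\mapsto\nu_k+1$ and $\nu_k\mapsto-\nu_k$ ($k=1,2,3$, acting on one coordinate at a time). For $\lambda=e^{i\theta}$, $\frac{(\lambda-1)^2}{4\lambda}=-\sin^2(\theta/2)$. *)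

theory Defs
  imports Complex_Main
begin

definition T0 :: "(real \<times> real \<times> real) set" where
  "T0 = {(a, b, c). a + b + c \<le> 1 \<and> a \<le> b + c \<and> b \<le> a + c \<and> c \<le> a + b}"

text \<open>T: the orbit of T0 under the group generated by the coordinate maps
  x_k |-> x_k + 1 and x_k |-> - x_k (k = 1,2,3).  The orbit under a group is the
  smallest set containing T0 closed under the generators and their inverses.\<close>
inductive_set T :: "(real \<times> real \<times> real) set" where
  base: "p \<in> T0 \<Longrightarrow> p \<in> T"
| shift1: "(a, b, c) \<in> T \<Longrightarrow> (a + 1, b, c) \<in> T"
| shift1_inv: "(a, b, c) \<in> T \<Longrightarrow> (a - 1, b, c) \<in> T"
| neg1: "(a, b, c) \<in> T \<Longrightarrow> (- a, b, c) \<in> T"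
| shift2: "(a, b, c) \<in> T \<Longrightarrow> (a, b + 1, c) \<in> T"
| shift2_inv: "(a, b, c) \<in> T \<Longrightarrow> (a, b - 1, c) \<in> T"
| neg2: "(a, b, c) \<in> T \<Longrightarrow> (a, - b, c) \<in> T"
| shift3: "(a, b, c) \<in> T \<Longrightarrow> (a, b, c + 1) \<in> T"
| shift3_inv: "(a, b, c) \<in> T \<Longrightarrow> (a, b, c - 1) \<in> T"
| neg3: "(a, b, c) \<in> T \<Longrightarrow> (a, b, - c) \<in> T"

text \<open>nu_w(lambda) = 1/2 - 1/2 sqrt(1 + w (lambda-1)^2/(4 lambda)), principal square root
  (for |lambda| = 1 and w < 1 the radicand is a nonnegative real, so this is the
  nonnegative real square root).\<close>
definition nu :: "real \<Rightarrow> complex \<Rightarrow> complex" where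
  "nu w l = 1/2 - 1/2 * csqrt (1 + complex_of_real w * (l - 1)^2 / (4 * l))"

definition nn :: "real \<Rightarrow> real" where
  "nn w = 1/2 * (1 - sqrt (1 - w))"

definition embC :: "real \<times> real \<times> real \<Rightarrow> complex \<times> complex \<times> complex" where
  "embC p = (case p of (a, b, c) \<Rightarrow> (complex_of_real a, complex_of_real b, complex_of_real c))"

end

theory Submission
  imports Defs
begin


definition gg :: "real \<Rightarrow> real \<Rightarrow> real" where "gg w s = (1 - sqrt (1 - w * s)) / 2"

lemma rad_pos: fixes w s :: real assumes "w < 1" "0 \<le> s" "s \<le> 1" shows "0 < 1 - w * s"
proof (cases "w \<ge> 0")
  case True then have "w * s \<le> w * 1" using assms mult_left_mono[of s 1 w] by simp
  then show ?thesis using assms by auto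
next
  case False then have "w * s \<le> 0" using assms by (simp add: mult_nonpos_nonneg)
  then show ?thesis by linarith
qed

lemma nn_gg: "nn w = gg w 1" by (simp add: nn_def gg_def)

lemma gg_mono: assumes "w < 1" "0 \<le> s" "s \<le> 1" shows "\<bar>gg w s\<bar> \<le> \<bar>gg w 1\<bar>"
proof (cases "w \<ge> 0")
  case True
  have "w * s \<le> w" using True assms mult_left_mono[of s 1 w] by auto
  moreover have "0 \<le> w * s" using True assms by simp
  ultimately have "sqrt (1 - w) \<le> sqrt (1 - w * s)" "sqrt (1 - w * s) \<le> 1" by auto
  then show ?thesis unfolding gg_def by auto
next
  case False
  have "w \<le> w * s" using False assms mult_left_mono_neg[of s 1 w] by auto
  moreover have "w * s \<le> 0" using False assms by (simp add: mult_nonpos_nonneg)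
  ultimately have "sqrt (1 - w * s) \<le> sqrt (1 - w)" "1 \<le> sqrt (1 - w * s)" by auto
  then show ?thesis unfolding gg_def by auto
qed

lemma gg_formula: assumes "w < 1" "0 \<le> s" "s \<le> 1"
  shows "2 * \<bar>gg w s\<bar> * (1 + sqrt (1 - w * s)) = \<bar>w\<bar> * s"
proof -
  have p: "0 < 1 - w * s" using rad_pos assms by blast
  define r where "r = sqrt (1 - w * s)"
  have p': "w * s \<le> 1" using p by linarith
  have r0: "0 \<le> r" unfolding r_def using p' by simp
  have rr: "r * r = 1 - w * s" unfolding r_def using p' by simp
  have "2 * \<bar>gg w s\<bar> * (1 + r) = \<bar>(1 - r) * (1 + r)\<bar>"
    unfolding gg_def r_def[symmetric] using r0 by (simp add: abs_mult)
  also have "\<dots> = \<bar>w * s\<bar>" using rr by (simp add: algebra_simps)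
  finally show ?thesis unfolding r_def using assms p' by (simp add: abs_mult)
qed

lemma gg_small: assumes "w < 1" "0 \<le> s" "s \<le> 1"
  shows "\<bar>gg w s\<bar> \<le> \<bar>w\<bar> * s / 2"
proof -
  have "w * s \<le> 1" using rad_pos[OF assms] by linarith
  then have "2 * \<bar>gg w s\<bar> * 1 \<le> 2 * \<bar>gg w s\<bar> * (1 + sqrt (1 - w * s))"
    by (intro mult_left_mono) auto
  then show ?thesis using gg_formula[OF assms] by simp
qed

lemma gg_nonzero: assumes "w < 1" "0 < s" "s \<le> 1" "w \<noteq> 0" shows "gg w s \<noteq> 0"
proof
  assume "gg w s = 0"
  then have "sqrt (1 - w * s) = 1" unfolding gg_def by simp
  then have "1 - w * s = 1" using rad_pos[of w s] assms by (metis real_sqrt_eq_1_iff)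
  then show False using assms by simp
qed



definition Pf :: "real \<Rightarrow> real \<Rightarrow> real" where "Pf s z = sqrt (1 + s * z) - 1"

lemma Pf_mono: assumes "0 \<le> s" "z \<le> z'" shows "Pf s z \<le> Pf s z'"
  using assms mult_left_mono[OF assms(2) assms(1)] unfolding Pf_def by simp

lemma Pf_sub: assumes "0 \<le> s" "0 \<le> x" "0 \<le> y" shows "Pf s (x + y) \<le> Pf s x + Pf s y"
proof -
  define A where "A = sqrt (1 + s * x)"
  define B where "B = sqrt (1 + s * y)"
  have sx: "0 \<le> s * x" "0 \<le> s * y" using assms by auto
  have A1: "1 \<le> A" unfolding A_def using sx by simp
  have B1: "1 \<le> B" unfolding B_def using sx by simp
  have AA: "A * A = 1 + s * x" unfolding A_def using sx by simp
  have BB: "B * B = 1 + s * y" unfolding B_def using sx by simp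
  have "1 + s * (x + y) = A * A + B * B - 1" using AA BB by (simp add: algebra_simps)
  also have "\<dots> \<le> (A + B - 1) * (A + B - 1)"
    using mult_nonneg_nonneg[of "A - 1" "B - 1"] A1 B1 by (simp add: algebra_simps)
  finally have le: "1 + s * (x + y) \<le> (A + B - 1)^2" by (simp add: power2_eq_square)
  have "0 \<le> A + B - 1" using A1 B1 by simp
  then have "sqrt (1 + s * (x + y)) \<le> A + B - 1" using le by (simp add: real_sqrt_le_iff real_le_lsqrt)
  then show ?thesis unfolding Pf_def A_def B_def by simp
qed

lemma Pf_le_gg: assumes "w < 1" "0 \<le> s" "s \<le> 1" shows "Pf s \<bar>w\<bar> \<le> 2 * \<bar>gg w s\<bar>"
proof (cases "w \<ge> 0")
  case False
  then have ws: "w * s \<le> 0" using assms by (simp add: mult_nonpos_nonneg)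
  then have "1 \<le> sqrt (1 - w * s)" by simp
  then have "2 * \<bar>gg w s\<bar> = sqrt (1 - w * s) - 1" unfolding gg_def by simp
  also have "1 - w * s = 1 + s * \<bar>w\<bar>" using False by (simp add: mult.commute)
  finally have "2 * \<bar>gg w s\<bar> = sqrt (1 + s * \<bar>w\<bar>) - 1" .
  then show ?thesis unfolding Pf_def by simp
next
  case True
  define x where "x = s * w"
  have x: "0 \<le> x" "x < 1" using rad_pos[OF assms] True assms unfolding x_def by (auto simp: mult.commute)
  have e: "2 * \<bar>gg w s\<bar> = 1 - sqrt (1 - x)"
    using x unfolding gg_def x_def by (simp add: mult.commute)
  have "(sqrt (1 + x) + sqrt (1 - x))^2 = 2 + 2 * sqrt ((1 + x) * (1 - x))"
    using x by (simp add: power2_eq_square algebra_simps real_sqrt_mult[symmetric])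
  also have "\<dots> \<le> 2 + 2 * 1" using x by (simp add: algebra_simps power2_eq_square)
  finally have "(sqrt (1 + x) + sqrt (1 - x))^2 \<le> 2^2" by simp
  then have "sqrt (1 + x) + sqrt (1 - x) \<le> 2"
    by (rule power2_le_imp_le) simp
  then show ?thesis unfolding Pf_def e using True by (simp add: x_def)
qed



definition fq :: "real \<Rightarrow> real \<Rightarrow> real" where "fq s t = sqrt (1 - s + s * t^2)"
definition Qf :: "real \<Rightarrow> real \<Rightarrow> real" where "Qf s a = 1 - fq s (1 - a)"

lemma fq_1: "fq s 1 = 1" by (simp add: fq_def)

lemma fq_convex:
  assumes s: "0 \<le> s" "s \<le> 1" and al: "0 \<le> al" "al \<le> 1"
  shows "fq s (al * p + (1 - al) * q) \<le> al * fq s p + (1 - al) * fq s q"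
proof -
  define c where "c = sqrt (1 - s)"
  define e where "e = sqrt s"
  have cc: "c^2 = 1 - s" unfolding c_def using s by simp
  have ee: "e^2 = s" unfolding e_def using s by simp
  have fqe: "fq s t = sqrt (c^2 + (e * t)^2)" for t
    unfolding fq_def cc power_mult_distrib ee by simp
  have sc: "sqrt ((k * c)^2 + (k * e * t)^2) = k * sqrt (c^2 + (e * t)^2)" if "0 \<le> k" for k t
  proof -
    have "(k * c)^2 + (k * e * t)^2 = k^2 * (c^2 + (e * t)^2)" by (simp add: algebra_simps power_mult_distrib)
    then show ?thesis using that by (simp add: real_sqrt_mult)
  qed
  have "fq s (al * p + (1 - al) * q) = sqrt ((al * c + (1 - al) * c)^2 + (al * e * p + (1 - al) * e * q)^2)"
    unfolding fqe by (simp add: algebra_simps)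
  also have "\<dots> \<le> sqrt ((al * c)^2 + (al * e * p)^2) + sqrt (((1 - al) * c)^2 + ((1 - al) * e * q)^2)"
    by (rule real_sqrt_sum_squares_triangle_ineq)
  also have "\<dots> = al * fq s p + (1 - al) * fq s q"
    using al by (simp add: sc fqe)
  finally show ?thesis .
qed

lemma fq_nonneg: assumes "0 \<le> s" "s \<le> 1" shows "0 \<le> fq s t"
  unfolding fq_def using assms by simp

lemma Q_sub: assumes s: "0 \<le> s" "s \<le> 1" and xy: "0 \<le> x" "0 \<le> y" "x + y \<le> 1"
  shows "Qf s (x + y) \<le> Qf s x + Qf s y"
proof (cases "x + y = 0")
  case True then have "x = 0" "y = 0" using xy by auto
  then show ?thesis by (simp add: Qf_def fq_1)
next
  case False
  then have xy0: "0 < x + y" using xy by auto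
  define m where "m = 1 - x - y"
  define al where "al = y / (x + y)"
  define be where "be = x / (x + y)"
  have al: "0 \<le> al" "al \<le> 1" unfolding al_def using xy xy0 by auto
  have be: "0 \<le> be" "be \<le> 1" unfolding be_def using xy xy0 by auto
  have ab: "al + be = 1" unfolding al_def be_def using xy0
    by (simp add: add_divide_distrib[symmetric] add.commute)
  have bx: "be * (x + y) = x" unfolding be_def using xy0 by simp
  have ay: "al * (x + y) = y" unfolding al_def using xy0 by simp
  have u: "1 - x = al * 1 + (1 - al) * m"
  proof -
    have "1 - al = be" using ab by simp
    then have "al * 1 + (1 - al) * m = al * 1 + be * m" by simp
    also have "\<dots> = al + be - be * (x + y)" unfolding m_def by (simp add: algebra_simps)
    finally show ?thesis using ab bx by simp
  qed
  have v: "1 - y = be * 1 + (1 - be) * m"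
  proof -
    have "1 - be = al" using ab by simp
    then have "be * 1 + (1 - be) * m = be * 1 + al * m" by simp
    also have "\<dots> = al + be - al * (x + y)" unfolding m_def by (simp add: algebra_simps)
    finally show ?thesis using ab ay by simp
  qed
  have "fq s (1 - x) \<le> al * 1 + (1 - al) * fq s m"
    using fq_convex[OF s al, of 1 m] unfolding u fq_1 by simp
  moreover have "fq s (1 - y) \<le> be * 1 + (1 - be) * fq s m"
    using fq_convex[OF s be, of 1 m] unfolding v fq_1 by simp
  moreover have "al * fq s m + be * fq s m = fq s m" using ab by (metis distrib_right mult_1)
  ultimately have "fq s (1 - x) + fq s (1 - y) \<le> 1 + fq s m"
    using ab by (simp add: algebra_simps)
  then show ?thesis unfolding Qf_def m_def by (simp add: algebra_simps)
qed

lemma Q_mono: assumes "0 \<le> s" "0 \<le> a" "a \<le> b" "b \<le> 1" shows "Qf s a \<le> Qf s b"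
proof -
  have "(1 - b)^2 \<le> (1 - a)^2" using assms by (intro power_mono) auto
  then have "s * (1 - b)^2 \<le> s * (1 - a)^2" using assms by (intro mult_left_mono) auto
  then show ?thesis unfolding Qf_def fq_def by simp
qed

lemma Q_nonneg: assumes "0 \<le> s" "s \<le> 1" "0 \<le> a" "a \<le> 1" shows "0 \<le> Qf s a"
  using Q_mono[of s 0 a] assms by (simp add: Qf_def fq_1)

lemma Q_tri: assumes s: "0 \<le> s" "s \<le> 1"
  and a: "0 \<le> a1" "a1 \<le> 1" "0 \<le> a2" "a2 \<le> 1" "0 \<le> a3" "a3 \<le> 1" "a1 \<le> a2 + a3"
  shows "Qf s a1 \<le> Qf s a2 + Qf s a3"
proof (cases "a2 \<ge> a1")
  case True
  then show ?thesis using Q_mono[of s a1 a2] Q_nonneg[of s a3] s a by simp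
next
  case False
  define b where "b = a1 - a2"
  have "Qf s a1 = Qf s (a2 + b)" unfolding b_def by simp
  also have "\<dots> \<le> Qf s a2 + Qf s b" using Q_sub[OF s, of a2 b] False a unfolding b_def by simp
  also have "\<dots> \<le> Qf s a2 + Qf s a3" using Q_mono[of s b a3] False a s unfolding b_def by simp
  finally show ?thesis .
qed

lemma gg_Q_eq: assumes "0 \<le> w" "w < 1" "0 \<le> s" "s \<le> 1"
  shows "2 * \<bar>gg w s\<bar> = Qf s (2 * \<bar>nn w\<bar>)"
proof -
  have r: "sqrt (1 - w) \<le> 1" using assms by simp
  have "2 * \<bar>nn w\<bar> = 1 - sqrt (1 - w)" unfolding nn_def using r by simp
  then have "1 - 2 * \<bar>nn w\<bar> = sqrt (1 - w)" by simp
  then have e: "(1 - 2 * \<bar>nn w\<bar>)^2 = 1 - w" using assms by simp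
  have "fq s (1 - 2 * \<bar>nn w\<bar>) = sqrt (1 - s + s * (1 - w))" unfolding fq_def e ..
  also have "\<dots> = sqrt (1 - w * s)" by (simp add: algebra_simps)
  finally have "fq s (1 - 2 * \<bar>nn w\<bar>) = sqrt (1 - w * s)" .
  moreover have "sqrt (1 - w * s) \<le> 1" using assms by simp
  ultimately show ?thesis unfolding Qf_def gg_def by simp
qed

lemma gg_Q_le: assumes "w < 0" "0 \<le> s" "s \<le> 1"
  shows "Qf s (2 * \<bar>nn w\<bar>) \<le> 2 * \<bar>gg w s\<bar>"
proof -
  define a where "a = 2 * \<bar>nn w\<bar>"
  have r: "1 \<le> sqrt (1 - w)" using assms by simp
  have "a = sqrt (1 - w) - 1" unfolding a_def nn_def using r by simp
  then have "1 + a = sqrt (1 - w)" by simp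
  then have e: "(1 + a)^2 = 1 - w" using assms by simp
  have "fq s (1 + a) = sqrt (1 - s + s * (1 - w))" unfolding fq_def e ..
  also have "\<dots> = sqrt (1 - w * s)" by (simp add: algebra_simps)
  finally have e1: "fq s (1 + a) = sqrt (1 - w * s)" .
  have ws: "w * s \<le> 0" using assms by (simp add: mult_nonpos_nonneg)
  then have "1 \<le> sqrt (1 - w * s)" by simp
  then have e2: "2 * \<bar>gg w s\<bar> = fq s (1 + a) - 1" unfolding gg_def e1 by simp
  have "fq s (1/2 * (1 + a) + (1 - 1/2) * (1 - a)) \<le> 1/2 * fq s (1 + a) + (1 - 1/2) * fq s (1 - a)"
    using assms by (intro fq_convex) auto
  moreover have "1/2 * (1 + a) + (1 - 1/2) * (1 - a) = (1::real)" by (simp add: field_simps)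
  ultimately have "1 \<le> 1/2 * fq s (1 + a) + 1/2 * fq s (1 - a)" using fq_1[of s] by simp
  then show ?thesis unfolding e2 Qf_def a_def[symmetric] by simp
qed



lemma nn_le1: "w < 1 \<Longrightarrow> 0 \<le> 2 * \<bar>nn w\<bar>" by simp

lemma F3:
  assumes w: "w1 < 1" "w2 < 1" "w3 < 1"
    and n: "\<bar>nn w1\<bar> \<le> 1/2" "\<bar>nn w2\<bar> \<le> 1/2" "\<bar>nn w3\<bar> \<le> 1/2"
    and tw: "\<bar>w1\<bar> \<le> \<bar>w2\<bar> + \<bar>w3\<bar>"
    and tn: "\<bar>nn w1\<bar> \<le> \<bar>nn w2\<bar> + \<bar>nn w3\<bar>"
    and s: "0 \<le> s" "s \<le> 1"
  shows "abs (gg w1 s) \<le> abs (gg w2 s) + abs (gg w3 s)"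
proof (cases "w1 < 0")
  case True
  have "2 * \<bar>gg w1 s\<bar> = Pf s \<bar>w1\<bar>"
  proof -
    have ws: "w1 * s \<le> 0" using True s by (simp add: mult_nonpos_nonneg)
    then have "1 \<le> sqrt (1 - w1 * s)" by simp
    then have "2 * \<bar>gg w1 s\<bar> = sqrt (1 - w1 * s) - 1" unfolding gg_def by simp
    also have "1 - w1 * s = 1 + s * \<bar>w1\<bar>" using True by (simp add: mult.commute)
    finally show ?thesis unfolding Pf_def .
  qed
  also have "\<dots> \<le> Pf s (\<bar>w2\<bar> + \<bar>w3\<bar>)" using Pf_mono s tw by blast
  also have "\<dots> \<le> Pf s \<bar>w2\<bar> + Pf s \<bar>w3\<bar>" using Pf_sub s by simp
  also have "\<dots> \<le> 2 * \<bar>gg w2 s\<bar> + 2 * \<bar>gg w3 s\<bar>" using Pf_le_gg w s by (meson add_mono)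
  finally show ?thesis by simp
next
  case False
  have le: "Qf s (2 * \<bar>nn w\<bar>) \<le> 2 * \<bar>gg w s\<bar>" if "w < 1" for w
    using gg_Q_le[of w s] gg_Q_eq[of w s] that s by (cases "w < 0") auto
  have "2 * \<bar>gg w1 s\<bar> = Qf s (2 * \<bar>nn w1\<bar>)" using gg_Q_eq[of w1 s] False w s by simp
  also have "\<dots> \<le> Qf s (2 * \<bar>nn w2\<bar>) + Qf s (2 * \<bar>nn w3\<bar>)"
    using n tn s by (intro Q_tri) auto
  also have "\<dots> \<le> 2 * \<bar>gg w2 s\<bar> + 2 * \<bar>gg w3 s\<bar>" using le w by (meson add_mono)
  finally show ?thesis by simp
qed



definition PT0 :: "real \<Rightarrow> real \<Rightarrow> real \<Rightarrow> bool" where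
  "PT0 x y z \<longleftrightarrow> x + y + z \<le> 1 \<and> x \<le> y + z \<and> y \<le> x + z \<and> z \<le> x + y"

lemma lemA:
  assumes w: "w1 < 1" "w2 < 1" "w3 < 1"
    and H: "\<forall>s\<in>{0..1}. abs (gg w1 s) \<le> 1/2 \<longrightarrow> abs (gg w2 s) \<le> 1/2 \<longrightarrow> abs (gg w3 s) \<le> 1/2
              \<longrightarrow> PT0 (abs (gg w1 s)) (abs (gg w2 s)) (abs (gg w3 s))"
  shows "\<bar>w1\<bar> \<le> \<bar>w2\<bar> + \<bar>w3\<bar>"
proof (rule ccontr)
  assume neg: "\<not> ?thesis"
  define k where "k w s = \<bar>w\<bar> / (1 + sqrt (1 - w * s))" for w s :: real
  define f where "f s = k w2 s + k w3 s - k w1 s" for s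
  have "isCont f 0" unfolding f_def k_def by (intro continuous_intros) auto
  then have "(f \<longlongrightarrow> f 0) (at 0)" by (simp add: isCont_def)
  moreover have "f 0 < 0" using neg unfolding f_def k_def by simp
  ultimately have "eventually (\<lambda>s. f s < 0) (at 0)" by (rule order_tendstoD(2))
  then obtain d where d: "d > 0" "\<And>x. x \<noteq> 0 \<Longrightarrow> dist x 0 < d \<Longrightarrow> f x < 0"
    unfolding eventually_at by auto
  define M where "M = \<bar>w1\<bar> + \<bar>w2\<bar> + \<bar>w3\<bar> + 1"
  have M: "M \<ge> 1" unfolding M_def by simp
  define s where "s = min (d/2) (1/M)"
  have s0: "0 < s" unfolding s_def using d M by simp
  have s1: "s \<le> 1" unfolding s_def using M by (simp add: min.coboundedI2)
  have sM: "s * M \<le> 1" unfolding s_def using M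
    by (metis div_by_1 le_divide_eq_1_pos less_le_trans min.cobounded2 mult.commute pos_le_divide_eq zero_less_one)
  have "s \<le> d/2" unfolding s_def by simp
  then have "f s < 0" using d s0 by (intro d(2)) auto
  have small: "\<bar>gg w s\<bar> \<le> 1/2" if "w < 1" "\<bar>w\<bar> \<le> M" for w
  proof -
    have b: "\<bar>w\<bar> * s \<le> M * s" using that s0 by (intro mult_right_mono) auto
    have a: "\<bar>gg w s\<bar> \<le> \<bar>w\<bar> * s / 2" using gg_small[of w s] that s0 s1 by simp
    have c: "M * s \<le> 1" using sM by (simp add: mult.commute)
    show ?thesis using a b c by linarith
  qed
  have "PT0 \<bar>gg w1 s\<bar> \<bar>gg w2 s\<bar> \<bar>gg w3 s\<bar>"
    using H s0 s1 small w unfolding M_def by auto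
  then have tri: "abs (gg w1 s) \<le> abs (gg w2 s) + abs (gg w3 s)" unfolding PT0_def by simp
  have gk: "\<bar>gg w s\<bar> = s / 2 * k w s" if "w < 1" for w
  proof -
    have "0 < 1 - w * s" using rad_pos[of w s] that s0 s1 by simp
    then have "0 \<le> sqrt (1 - w * s)" by simp
    then have p: "0 < 1 + sqrt (1 - w * s)" by linarith
    show ?thesis using gg_formula[of w s] that s0 s1 p unfolding k_def
      by (simp add: field_simps)
  qed
  have "s / 2 * k w1 s \<le> s / 2 * (k w2 s + k w3 s)" using tri gk w by (simp add: algebra_simps)
  then have "k w1 s \<le> k w2 s + k w3 s" using s0 by simp
  then show False using \<open>f s < 0\<close> unfolding f_def by simp
qed

lemma lemB:
  assumes w1: "w1 < -3" and le: "w1 \<le> w2" "w1 \<le> w3" and w: "w2 < 1" "w3 < 1" "w2 \<noteq> 0" "w3 \<noteq> 0"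
    and tw: "\<bar>w1\<bar> \<le> \<bar>w2\<bar> + \<bar>w3\<bar>"
    and H: "\<forall>s\<in>{0..1}. abs (gg w1 s) \<le> 1/2 \<longrightarrow> abs (gg w2 s) \<le> 1/2 \<longrightarrow> abs (gg w3 s) \<le> 1/2
              \<longrightarrow> PT0 (abs (gg w1 s)) (abs (gg w2 s)) (abs (gg w3 s))"
  shows False
proof -
  define s where "s = - 3 / w1"
  have s0: "0 < s" unfolding s_def using w1 by (simp add: divide_neg_neg)
  have s1: "s \<le> 1" unfolding s_def using w1 by (simp add: divide_le_eq le_divide_eq)
  have w1s: "w1 * s = -3" unfolding s_def using w1 by simp
  have g1: "gg w1 s = - 1/2" unfolding gg_def w1s by simp
  have gj: "abs (gg w s) \<le> 1/2" "gg w s \<noteq> 0" "w * s = 4 * gg w s * (1 - gg w s)"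
    if "w1 \<le> w" "w < 1" "w \<noteq> 0" for w
  proof -
    have "w1 * s \<le> w * s" using that s0 by (intro mult_right_mono) auto
    then have a: "1 - w * s \<le> 4" using w1s by simp
    have b: "0 < 1 - w * s" using rad_pos[of w s] that s0 s1 by simp
    have "sqrt (1 - w * s) \<le> sqrt 4" using a by (subst real_sqrt_le_iff) simp
    moreover have "sqrt 4 = (2::real)" by (simp add: real_sqrt_eq_iff power2_eq_square[symmetric])
    moreover have "0 < sqrt (1 - w * s)" using b by simp
    ultimately have "-1 \<le> 1 - sqrt (1 - w * s)" "1 - sqrt (1 - w * s) \<le> 1" by linarith+
    then show "abs (gg w s) \<le> 1/2" unfolding gg_def by (simp add: abs_le_iff)
    show "gg w s \<noteq> 0" using gg_nonzero[of w s] that s0 s1 by simp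
    have "(sqrt (1 - w * s))^2 = 1 - w * s" using b by simp
    moreover have "sqrt (1 - w * s) = 1 - 2 * gg w s" unfolding gg_def by (simp add: field_simps)
    ultimately have "(1 - 2 * gg w s)^2 = 1 - w * s" by simp
    then show "w * s = 4 * gg w s * (1 - gg w s)" by (simp add: power2_eq_square algebra_simps)
  qed
  have sI: "s \<in> {0..1}" using s0 s1 by simp
  have "PT0 (abs (gg w1 s)) (abs (gg w2 s)) (abs (gg w3 s))"
    by (rule H[rule_format, OF sI]) (use gj(1)[OF le(1) w(1) w(3)] gj(1)[OF le(2) w(2) w(4)] g1 in auto)
  then have sum: "abs (gg w2 s) + abs (gg w3 s) = 1/2" unfolding PT0_def g1 by simp
  define h2 where "h2 = abs (gg w2 s)"
  define h3 where "h3 = abs (gg w3 s)"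
  have h2: "0 < h2" unfolding h2_def using gj(2)[OF le(1) w(1) w(3)] by simp
  have h3: "0 < h3" unfolding h3_def using gj(2)[OF le(2) w(2) w(4)] by simp
  have bnd: "abs w * s \<le> 4 * abs (gg w s) * (1 + abs (gg w s))"
    if "w1 \<le> w" "w < 1" "w \<noteq> 0" for w
  proof -
    have "abs w * s = abs (w * s)" using s0 by (simp add: abs_mult)
    also have "\<dots> = 4 * abs (gg w s) * abs (1 - gg w s)" using gj(3)[OF that] by (simp add: abs_mult)
    also have "\<dots> \<le> 4 * abs (gg w s) * (1 + abs (gg w s))"
      by (intro mult_left_mono) auto
    finally show ?thesis .
  qed
  have "abs w2 * s + abs w3 * s \<le> 4 * h2 * (1 + h2) + 4 * h3 * (1 + h3)"
    unfolding h2_def h3_def using bnd[OF le(1) w(1) w(3)] bnd[OF le(2) w(2) w(4)] by simp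
  also have "\<dots> = 4 * (h2 + h3) + 4 * ((h2 + h3)^2 - 2 * h2 * h3)"
    by (simp add: power2_eq_square algebra_simps)
  also have "\<dots> = 4 * (1/2) + 4 * ((1/2)^2 - 2 * h2 * h3)"
    using sum unfolding h2_def[symmetric] h3_def[symmetric] by (simp only:)
  also have "\<dots> = 3 - 8 * h2 * h3" by (simp add: power2_eq_square)
  also have "\<dots> < 3" using h2 h3 by simp
  finally have lt: "abs w2 * s + abs w3 * s < 3" .
  have "abs w1 * s = 3" using w1s w1 s0 by (simp add: abs_if)
  moreover have "abs w1 * s \<le> abs w2 * s + abs w3 * s"
    using tw s0 by (simp add: distrib_right[symmetric] mult_right_mono)
  ultimately show False using lt by simp
qed



definition dd :: "real \<Rightarrow> real" where "dd x = min (frac x) (1 - frac x)"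

lemma dd_plus1: "dd (x + 1) = dd x" by (simp add: dd_def frac_1_eq)
lemma dd_minus1: "dd (x - 1) = dd x"
  by (metis diff_add_cancel dd_plus1)
lemma dd_neg: "dd (- x) = dd x"
proof (cases "x \<in> \<int>")
  case True
  then have "frac x = 0" by simp
  then show ?thesis using True unfolding dd_def frac_neg by (simp del: frac_eq_0_iff)
qed (auto simp: dd_def frac_neg min.commute)

lemma dd_small: assumes "\<bar>x\<bar> \<le> 1/2" shows "dd x = \<bar>x\<bar>"
proof (cases "x \<ge> 0")
  case True
  then have "frac x = x" using assms by (simp add: frac_eq)
  then show ?thesis using True assms by (simp add: dd_def)
next
  case False
  then have "frac (x+1) = x + 1" using assms by (subst frac_eq) auto
  then have "frac x = x + 1" by (simp add: frac_1_eq)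
  then show ?thesis using False assms by (simp add: dd_def)
qed


lemma T0_PT0: "(x,y,z) \<in> T0 \<longleftrightarrow> PT0 x y z" by (simp add: T0_def PT0_def)

lemma T_inv: "p \<in> T \<Longrightarrow> (case p of (a,b,c) \<Rightarrow> PT0 (dd a) (dd b) (dd c))"
proof (induction rule: T.induct)
  case (base p)
  obtain a b c where p: "p = (a,b,c)" by (cases p) auto
  have h: "PT0 a b c" using base p by (simp add: T0_PT0)
  then have "\<bar>a\<bar> \<le> 1/2" "\<bar>b\<bar> \<le> 1/2" "\<bar>c\<bar> \<le> 1/2" unfolding PT0_def by auto
  then show ?case using h p by (simp add: dd_small abs_of_nonneg PT0_def)
qed (simp_all add: dd_plus1 dd_minus1 dd_neg)

lemma T_abs: assumes "PT0 \<bar>a\<bar> \<bar>b\<bar> \<bar>c\<bar>" shows "(a,b,c) \<in> T"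
proof -
  have 0: "(\<bar>a\<bar>,\<bar>b\<bar>,\<bar>c\<bar>) \<in> T" using assms by (intro T.base) (simp add: T0_PT0)
  have 1: "(a,\<bar>b\<bar>,\<bar>c\<bar>) \<in> T"
    using 0 T.neg1[OF 0] by (cases "a \<ge> 0") auto
  have 2: "(a,b,\<bar>c\<bar>) \<in> T"
    using 1 T.neg2[OF 1] by (cases "b \<ge> 0") auto
  show ?thesis
    using 2 T.neg3[OF 2] by (cases "c \<ge> 0") auto
qed

lemma T_small: assumes "\<bar>a\<bar> \<le> 1/2" "\<bar>b\<bar> \<le> 1/2" "\<bar>c\<bar> \<le> 1/2"
  shows "(a,b,c) \<in> T \<longleftrightarrow> PT0 \<bar>a\<bar> \<bar>b\<bar> \<bar>c\<bar>"
  using T_inv[of "(a,b,c)"] T_abs[of a b c] assms by (auto simp: dd_small)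


lemma nu_eq:
  fixes l :: complex
  assumes "norm l = 1" "w < 1"
  shows "nu w l = of_real (gg w ((1 - Re l) / 2))"
proof -
  have l0: "l \<noteq> 0" using assms by auto
  have lc: "l * cnj l = 1" using complex_norm_square[of l] assms by simp
  have inv: "1 / l = cnj l" using lc l0 by (simp add: field_simps)
  have "(l - 1)^2 / (4 * l) = (l + 1/l - 2) / 4" using l0 by (simp add: field_simps power2_eq_square)
  also have "\<dots> = of_real ((Re l - 1) / 2)" unfolding inv
    by (simp add: complex_eq_iff)
  finally have e: "complex_of_real w * (l - 1)^2 / (4 * l) = of_real (w * (Re l - 1) / 2)"
    by (metis mult.assoc of_real_mult times_divide_eq_right times_divide_eq_left)
  define s where "s = (1 - Re l) / 2"
  have "\<bar>Re l\<bar> \<le> 1" using abs_Re_le_cmod[of l] assms by simp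
  then have s: "0 \<le> s" "s \<le> 1" unfolding s_def by auto
  have pos: "0 \<le> 1 - w * s"
  proof (cases "w \<ge> 0")
    case True then have "w * s \<le> w * 1" using s by (intro mult_left_mono) auto
    then show ?thesis using assms by auto
  next
    case False then have "w * s \<le> 0" using s by (simp add: mult_nonpos_nonneg)
    then show ?thesis by linarith
  qed
  have "1 + complex_of_real w * (l - 1)^2 / (4 * l) = of_real (1 - w * s)"
    unfolding e s_def by (simp add: field_simps)
  then have "csqrt (1 + complex_of_real w * (l - 1)^2 / (4 * l)) = of_real (sqrt (1 - w * s))"
    using of_real_sqrt[OF pos] by simp
  then show ?thesis unfolding nu_def gg_def s_def by simp
qed

lemma reduce:
  assumes "w1 < 1" "w2 < 1" "w3 < 1"
  shows "(\<forall>l::complex. norm l = 1 \<longrightarrow> (nu w1 l, nu w2 l, nu w3 l) \<in> embC ` T)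
    \<longleftrightarrow> (\<forall>s\<in>{0..1}. (gg w1 s, gg w2 s, gg w3 s) \<in> T)"
proof
  assume H: "\<forall>l::complex. norm l = 1 \<longrightarrow> (nu w1 l, nu w2 l, nu w3 l) \<in> embC ` T"
  show "\<forall>s\<in>{0..1}. (gg w1 s, gg w2 s, gg w3 s) \<in> T"
  proof
    fix s :: real assume s: "s \<in> {0..1}"
    define l where "l = Complex (1 - 2*s) (sqrt (1 - (1 - 2*s)^2))"
    have "(1 - 2*s)^2 \<le> 1" using s by (auto simp: abs_square_le_1)
    then have "norm l = 1" unfolding l_def cmod_def by simp
    moreover have "(1 - Re l) / 2 = s" unfolding l_def by simp
    ultimately have "(of_real (gg w1 s), of_real (gg w2 s), of_real (gg w3 s)) \<in> embC ` T"
      using H nu_eq assms by metis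
    then obtain a b c where "(a,b,c) \<in> T" "(of_real (gg w1 s), of_real (gg w2 s), of_real (gg w3 s)) = embC (a,b,c)"
      by auto
    then show "(gg w1 s, gg w2 s, gg w3 s) \<in> T" by (simp add: embC_def)
  qed
next
  assume H: "\<forall>s\<in>{0..1}. (gg w1 s, gg w2 s, gg w3 s) \<in> T"
  show "\<forall>l::complex. norm l = 1 \<longrightarrow> (nu w1 l, nu w2 l, nu w3 l) \<in> embC ` T"
  proof (intro allI impI)
    fix l :: complex assume l: "norm l = 1"
    define s where "s = (1 - Re l) / 2"
    have "\<bar>Re l\<bar> \<le> 1" using abs_Re_le_cmod[of l] l by simp
    then have "s \<in> {0..1}" unfolding s_def by auto
    then have "(gg w1 s, gg w2 s, gg w3 s) \<in> T" using H by auto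
    then have "embC (gg w1 s, gg w2 s, gg w3 s) \<in> embC ` T" by blast
    then show "(nu w1 l, nu w2 l, nu w3 l) \<in> embC ` T"
      using nu_eq[OF l] assms unfolding s_def by (simp add: embC_def)
  qed
qed

lemma nn_big: assumes "w < 1" "\<not> abs (nn w) \<le> 1/2" shows "w < -3"
proof -
  have "0 \<le> sqrt (1 - w)" using assms by simp
  then have "nn w \<le> 1/2" unfolding nn_def by simp
  then have "nn w < -1/2" using assms by linarith
  then have "2 < sqrt (1 - w)" unfolding nn_def by simp
  moreover have "sqrt 4 = (2::real)" by (simp add: real_sqrt_eq_iff power2_eq_square[symmetric])
  ultimately have "sqrt 4 < sqrt (1 - w)" by simp
  then show ?thesis by (simp only: real_sqrt_less_iff)
qed


lemma PT0_swap: "PT0 x y z \<Longrightarrow> PT0 y x z" unfolding PT0_def by linarith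
lemma PT0_rot: "PT0 x y z \<Longrightarrow> PT0 z x y" unfolding PT0_def by linarith



theorem mainTheorem6:
  fixes w1 w2 w3 :: real
  assumes "w1 < 1" "w2 < 1" "w3 < 1" "w1 \<noteq> 0" "w2 \<noteq> 0" "w3 \<noteq> 0"
  shows "(\<forall>l::complex. norm l = 1 \<longrightarrow> (nu w1 l, nu w2 l, nu w3 l) \<in> embC ` T)
    \<longleftrightarrow> (\<bar>nn w1\<bar> + \<bar>nn w2\<bar> + \<bar>nn w3\<bar> \<le> 1
         \<and> \<bar>nn w1\<bar> \<le> \<bar>nn w2\<bar> + \<bar>nn w3\<bar>
         \<and> \<bar>nn w2\<bar> \<le> \<bar>nn w1\<bar> + \<bar>nn w3\<bar>
         \<and> \<bar>nn w3\<bar> \<le> \<bar>nn w1\<bar> + \<bar>nn w2\<bar>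
         \<and> \<bar>w1\<bar> \<le> \<bar>w2\<bar> + \<bar>w3\<bar>
         \<and> \<bar>w2\<bar> \<le> \<bar>w1\<bar> + \<bar>w3\<bar>
         \<and> \<bar>w3\<bar> \<le> \<bar>w1\<bar> + \<bar>w2\<bar>)"
    (is "?L \<longleftrightarrow> ?R")
proof -
  have red: "?L \<longleftrightarrow> (\<forall>s\<in>{0..1}. (gg w1 s, gg w2 s, gg w3 s) \<in> T)"
    by (rule reduce[OF assms(1,2,3)])
  have dir1: "?R" if G: "\<forall>s\<in>{0..1}. (gg w1 s, gg w2 s, gg w3 s) \<in> T"
  proof -
    have H: "\<forall>s\<in>{0..1}. abs (gg w1 s) \<le> 1/2 \<longrightarrow> abs (gg w2 s) \<le> 1/2 \<longrightarrow> abs (gg w3 s) \<le> 1/2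
              \<longrightarrow> PT0 (abs (gg w1 s)) (abs (gg w2 s)) (abs (gg w3 s))"
    proof (intro ballI impI)
      fix s :: real assume s: "s \<in> {0..1}" and a: "abs (gg w1 s) \<le> 1/2" "abs (gg w2 s) \<le> 1/2" "abs (gg w3 s) \<le> 1/2"
      show "PT0 (abs (gg w1 s)) (abs (gg w2 s)) (abs (gg w3 s))"
        using T_small[OF a] G s by simp
    qed
    have H2: "\<forall>s\<in>{0..1}. abs (gg w2 s) \<le> 1/2 \<longrightarrow> abs (gg w1 s) \<le> 1/2 \<longrightarrow> abs (gg w3 s) \<le> 1/2
              \<longrightarrow> PT0 (abs (gg w2 s)) (abs (gg w1 s)) (abs (gg w3 s))"
    proof (intro ballI impI)
      fix s :: real assume s: "s \<in> {0..1}" and a: "abs (gg w2 s) \<le> 1/2" "abs (gg w1 s) \<le> 1/2" "abs (gg w3 s) \<le> 1/2"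
      have "PT0 (abs (gg w1 s)) (abs (gg w2 s)) (abs (gg w3 s))"
        using H s a by simp
      then show "PT0 (abs (gg w2 s)) (abs (gg w1 s)) (abs (gg w3 s))" by (rule PT0_swap)
    qed
    have H3: "\<forall>s\<in>{0..1}. abs (gg w3 s) \<le> 1/2 \<longrightarrow> abs (gg w1 s) \<le> 1/2 \<longrightarrow> abs (gg w2 s) \<le> 1/2
              \<longrightarrow> PT0 (abs (gg w3 s)) (abs (gg w1 s)) (abs (gg w2 s))"
    proof (intro ballI impI)
      fix s :: real assume s: "s \<in> {0..1}" and a: "abs (gg w3 s) \<le> 1/2" "abs (gg w1 s) \<le> 1/2" "abs (gg w2 s) \<le> 1/2"
      have "PT0 (abs (gg w1 s)) (abs (gg w2 s)) (abs (gg w3 s))"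
        using H s a by simp
      then show "PT0 (abs (gg w3 s)) (abs (gg w1 s)) (abs (gg w2 s))" by (rule PT0_rot)
    qed
    have tw1: "abs w1 \<le> abs w2 + abs w3" by (rule lemA[OF assms(1,2,3) H])
    have tw2: "abs w2 \<le> abs w1 + abs w3" by (rule lemA[OF assms(2,1,3) H2])
    have tw3: "abs w3 \<le> abs w1 + abs w2" by (rule lemA[OF assms(3,1,2) H3])
    have small: "abs (nn w1) \<le> 1/2 \<and> abs (nn w2) \<le> 1/2 \<and> abs (nn w3) \<le> 1/2"
    proof (rule ccontr)
      assume nc: "\<not> (abs (nn w1) \<le> 1/2 \<and> abs (nn w2) \<le> 1/2 \<and> abs (nn w3) \<le> 1/2)"
      have m: "w1 < -3 \<or> w2 < -3 \<or> w3 < -3"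
      proof (cases "abs (nn w1) \<le> 1/2")
        case True
        show ?thesis
        proof (cases "abs (nn w2) \<le> 1/2")
          case True2: True
          then have "\<not> abs (nn w3) \<le> 1/2" using nc True by simp
          then show ?thesis using nn_big[OF assms(3)] by simp
        next
          case False
          then show ?thesis using nn_big[OF assms(2)] by simp
        qed
      next
        case False
        then show ?thesis using nn_big[OF assms(1)] by simp
      qed
      consider "w1 \<le> w2 \<and> w1 \<le> w3" | "w2 \<le> w1 \<and> w2 \<le> w3" | "w3 \<le> w1 \<and> w3 \<le> w2" by linarith
      then show False
      proof cases
        case 1
        then have "w1 < -3" using m by linarith
        with 1 show False by (intro lemB[OF _ _ _ assms(2,3,5,6) tw1 H]) auto
      next
        case 2
        then have "w2 < -3" using m by linarith
        with 2 show False by (intro lemB[OF _ _ _ assms(1,3,4,6) tw2 H2]) auto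
      next
        case 3
        then have "w3 < -3" using m by linarith
        with 3 show False by (intro lemB[OF _ _ _ assms(1,2,4,5) tw3 H3]) auto
      qed
    qed
    have "(gg w1 1, gg w2 1, gg w3 1) \<in> T" using G by simp
    moreover have "abs (gg w1 1) \<le> 1/2" "abs (gg w2 1) \<le> 1/2" "abs (gg w3 1) \<le> 1/2"
      using small unfolding nn_gg by auto
    ultimately have "PT0 (abs (gg w1 1)) (abs (gg w2 1)) (abs (gg w3 1))"
      using T_small by blast
    then have "PT0 (abs (nn w1)) (abs (nn w2)) (abs (nn w3))" unfolding nn_gg .
    then show ?R using tw1 tw2 tw3 unfolding PT0_def by linarith
  qed
  have dir2: "\<forall>s\<in>{0..1}. (gg w1 s, gg w2 s, gg w3 s) \<in> T" if R: ?R
  proof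
    have n1: "abs (nn w1) \<le> 1/2" and n2: "abs (nn w2) \<le> 1/2" and n3: "abs (nn w3) \<le> 1/2"
      using R by linarith+
    have tn1: "abs (nn w1) \<le> abs (nn w2) + abs (nn w3)" and tn2: "abs (nn w2) \<le> abs (nn w1) + abs (nn w3)"
      and tn3: "abs (nn w3) \<le> abs (nn w1) + abs (nn w2)" and sn: "abs (nn w1) + abs (nn w2) + abs (nn w3) \<le> 1"
      and tw1: "abs w1 \<le> abs w2 + abs w3" and tw2: "abs w2 \<le> abs w1 + abs w3"
      and tw3: "abs w3 \<le> abs w1 + abs w2"
      using R by simp_all
    fix s :: real assume s: "s \<in> {0..1}"
    then have s0: "0 \<le> s" and s1: "s \<le> 1" by auto
    have m1: "abs (gg w1 s) \<le> abs (nn w1)" using gg_mono[OF assms(1) s0 s1] unfolding nn_gg .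
    have m2: "abs (gg w2 s) \<le> abs (nn w2)" using gg_mono[OF assms(2) s0 s1] unfolding nn_gg .
    have m3: "abs (gg w3 s) \<le> abs (nn w3)" using gg_mono[OF assms(3) s0 s1] unfolding nn_gg .
    have t1: "abs (gg w1 s) \<le> abs (gg w2 s) + abs (gg w3 s)"
      by (rule F3[OF assms(1,2,3) n1 n2 n3 tw1 tn1 s0 s1])
    have t2: "abs (gg w2 s) \<le> abs (gg w1 s) + abs (gg w3 s)"
      by (rule F3[OF assms(2,1,3) n2 n1 n3 tw2 tn2 s0 s1])
    have t3: "abs (gg w3 s) \<le> abs (gg w1 s) + abs (gg w2 s)"
      by (rule F3[OF assms(3,1,2) n3 n1 n2 tw3 tn3 s0 s1])
    have P: "PT0 (abs (gg w1 s)) (abs (gg w2 s)) (abs (gg w3 s))"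
      unfolding PT0_def using t1 t2 t3 m1 m2 m3 sn by linarith
    have a: "abs (gg w1 s) \<le> 1/2" "abs (gg w2 s) \<le> 1/2" "abs (gg w3 s) \<le> 1/2"
      using m1 m2 m3 n1 n2 n3 by linarith+
    show "(gg w1 s, gg w2 s, gg w3 s) \<in> T" using T_small[OF a] P by simp
  qed
  show ?thesis using red dir1 dir2 by blast
qed

end
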